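(* Let $K$ be a field of characteristic $0$, let $E$ be the infinite-dimensional unitary Grassmann algebra over $K$ with even part $E_0$, let $A=\begin{pmatrix} E_0 & E\\ 0 & E\end{pmatrix}$, and let $F_n(A)=K\langle x_1,\dots,x_n\rangle/(K\langle x_1,\dots,x_n\rangle\cap T(A))$. Let $n\geq 2$ be even and $m\geq n+2$. Then the polynomial \[f_{m,n+2}^{(5)}=\sum_{\sigma\in S_{n+2}}(-1)^{\sigma}[x_{\sigma(1)},x_{\sigma(2)},x_1,\dots,x_1][x_{\sigma(3)},x_{\sigma(4)}]\cdots[x_{\sigma(n+1)},x_{\sigma(n+2)}],\] where each first factor is the left-normed commutator of length $m-n$ consisting of $x_{\sigma(1)},x_{\sigma(2)}$ followed by $m-n-2$ copies of $x_1$, is not a polynomial identity of $F_n(A)$.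
   Context: All algebras are associative and unitary over $K$; $T(A)$ is the ideal of polynomial identities of $A$. $E$ is generated by anticommuting $e_1,e_2,\dots$ and $E_0$ is the span of basis products of even length. Commutators: $[a,b]=ab-ba$, $[a_1,\dots,a_k]=[[a_1,\dots,a_{k-1}],a_k]$; $(-1)^\sigma$ is the sign of $\sigma$. The polynomial has total degree $m$. *)

theory Defs
  imports "HOL-Combinatorics.Combinatorics" "HOL-Library.Function_Algebras" "HOL-Library.Product_Plus"
begin

text \<open>An element of E is a function assigning to each finite set S of indices the
coefficient of the basis monomial e_S = e_{s1} e_{s2} ... e_{sk} (s1 < ... < sk).\<close>

type_synonym 'k grass = "nat set \<Rightarrow> 'k"

definition grass_sgn :: "nat set \<Rightarrow> nat set \<Rightarrow> 'k::ring_1" where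
  "grass_sgn S T = (-1) ^ card {(s,t). s \<in> S \<and> t \<in> T \<and> t < s}"

text \<open>Product: e_S e_T = 0 if S, T intersect, else grass_sgn S T * e_(S union T).\<close>
definition gmul :: "'k::ring_1 grass \<Rightarrow> 'k grass \<Rightarrow> 'k grass" where
  "gmul x y U = (if finite U then (\<Sum>S\<in>Pow U. grass_sgn S (U - S) * x S * y (U - S)) else 0)"

definition gone :: "'k::ring_1 grass" where
  "gone U = (if U = {} then 1 else 0)"

definition grassmann :: "'k::field grass set" where
  "grassmann = {x. finite {S. x S \<noteq> 0} \<and> (\<forall>S. x S \<noteq> 0 \<longrightarrow> finite S)}"

definition grassmann_even :: "'k::field grass set" where
  "grassmann_even = {x \<in> grassmann. \<forall>S. x S \<noteq> 0 \<longrightarrow> even (card S)}"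

text \<open>(a,b,c) represents the upper triangular matrix [[a,b],[0,c]].
Addition, negation and zero are componentwise (Product_Plus, Function_Algebras).\<close>

type_synonym 'k utm = "'k grass \<times> 'k grass \<times> 'k grass"

definition algA :: "'k::field utm set" where
  "algA = {(a,b,c). a \<in> grassmann_even \<and> b \<in> grassmann \<and> c \<in> grassmann}"

fun amul :: "'k::ring_1 utm \<Rightarrow> 'k utm \<Rightarrow> 'k utm" where
  "amul (a,b,c) (a',b',c') = (gmul a a', gmul a b' + gmul b c', gmul c c')"

definition aone :: "'k::ring_1 utm" where
  "aone = (gone, 0, gone)"

fun asmul :: "'k::ring_1 \<Rightarrow> 'k utm \<Rightarrow> 'k utm" where
  "asmul k (a,b,c) = ((\<lambda>U. k * a U), (\<lambda>U. k * b U), (\<lambda>U. k * c U))"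

definition acomm :: "'k::ring_1 utm \<Rightarrow> 'k utm \<Rightarrow> 'k utm" where
  "acomm x y = amul x y - amul y x"

datatype 'k ncpoly = PVar nat | PConst 'k | PAdd "'k ncpoly" "'k ncpoly" | PMul "'k ncpoly" "'k ncpoly"

fun pvars :: "'k ncpoly \<Rightarrow> nat set" where
  "pvars (PVar i) = {i}"
| "pvars (PConst k) = {}"
| "pvars (PAdd p q) = pvars p \<union> pvars q"
| "pvars (PMul p q) = pvars p \<union> pvars q"

fun peval :: "(nat \<Rightarrow> 'k::ring_1 utm) \<Rightarrow> 'k ncpoly \<Rightarrow> 'k utm" where
  "peval a (PVar i) = a i"
| "peval a (PConst k) = asmul k aone"
| "peval a (PAdd p q) = peval a p + peval a q"
| "peval a (PMul p q) = amul (peval a p) (peval a q)"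

definition f5 :: "nat \<Rightarrow> nat \<Rightarrow> (nat \<Rightarrow> 'k::ring_1 utm) \<Rightarrow> 'k utm" where
  "f5 m n y = (\<Sum>\<sigma> | \<sigma> permutes {1..n+2}.
      asmul (of_int (sign \<sigma>))
        (foldl amul
          (foldl acomm (acomm (y (\<sigma> 1)) (y (\<sigma> 2))) (replicate (m - n - 2) (y 1)))
          (map (\<lambda>i. acomm (y (\<sigma> (2*i+1))) (y (\<sigma> (2*i+2)))) [1..<n div 2 + 1])))"

end

theory Submission
  imports Defs
begin


lemma sum_fun_apply: "(sum f A) x = sum (\<lambda>a. f a x) A"
  by (induction A rule: infinite_finite_induct) auto

definition gmono :: "nat set \<Rightarrow> 'k::ring_1 \<Rightarrow> 'k grass" where
  "gmono S c = (\<lambda>T. if T = S then c else 0)"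

lemma gone_mono: "gone = gmono {} 1"
  by (auto simp: gone_def gmono_def fun_eq_iff)

lemma gmul_0_left[simp]: "gmul 0 x = 0"
  by (auto simp: gmul_def fun_eq_iff)
lemma gmul_0_right[simp]: "gmul x 0 = 0"
  by (auto simp: gmul_def fun_eq_iff)

lemma gmul_mono_right:
  "gmul x (gmono T d) U = (if finite U \<and> T \<subseteq> U then grass_sgn (U - T) T * x (U - T) * d else 0)"
proof (cases "finite U")
  case fin: True
  have "gmul x (gmono T d) U = (\<Sum>S\<in>Pow U. if S = U - T \<and> T \<subseteq> U then grass_sgn S (U - S) * x S * d else 0)"
    unfolding gmul_def gmono_def using fin
    by (simp, intro sum.cong) auto
  also have "\<dots> = (if T \<subseteq> U then grass_sgn (U - T) T * x (U - T) * d else 0)"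
  proof (cases "T \<subseteq> U")
    case True
    then have "U - (U - T) = T" by blast
    with True fin show ?thesis by (simp add: sum.delta' del: Pow_iff) blast
  qed simp
  finally show ?thesis using fin by simp
qed (simp add: gmul_def)

lemma gmul_mono_mono:
  assumes "finite S" "finite T"
  shows "gmul (gmono S c) (gmono T d) = (if S \<inter> T = {} then gmono (S \<union> T) (grass_sgn S T * c * d) else 0)"
proof (rule ext)
  fix U
  show "gmul (gmono S c) (gmono T d) U = (if S \<inter> T = {} then gmono (S \<union> T) (grass_sgn S T * c * d) else 0) U"
    unfolding gmul_mono_right using assms
    by (auto simp: gmono_def Diff_triv)
qed

lemma gmul_gone_left_empty: "gmul gone b {} = b {}"
  by (simp add: gmul_def gone_def grass_sgn_def)

lemma grass_sgn_single: "grass_sgn {a} {b} = (if b < a then -1 else (1::'k::ring_1))"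
proof -
  have "{(s,t). s \<in> {a} \<and> t \<in> {b} \<and> t < s} = (if b < a then {(a,b)} else {})" by auto
  then show ?thesis by (simp add: grass_sgn_def)
qed

lemma gone_gone: "gmul gone gone = (gone::'k::ring_1 grass)"
  by (simp add: gone_mono gmul_mono_mono grass_sgn_def)




definition INV :: "(nat \<Rightarrow> nat) \<Rightarrow> nat set \<Rightarrow> nat" where
  "INV p S = card {(i,j). i \<in> S \<and> j \<in> S \<and> i < j \<and> p j < p i}"

lemma flip_odd:
  fixes p :: "nat \<Rightarrow> nat"
  assumes S: "finite S" and p: "p permutes S" and ab: "a \<in> S" "b \<in> S" "a < b"
  shows "odd (INV (Transposition.transpose a b \<circ> p) S + INV p S)"
proof -
  let ?t = "Transposition.transpose a b"
  define fl where "fl u v \<longleftrightarrow> ((v < u) \<noteq> (?t v < ?t u))" for u v :: nat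
  define A where "A = {(i,j). i \<in> S \<and> j \<in> S \<and> i < j \<and> p j < p i}"
  define B where "B = {(i,j). i \<in> S \<and> j \<in> S \<and> i < j \<and> (?t \<circ> p) j < (?t \<circ> p) i}"
  define F where "F = {(i,j). i \<in> S \<and> j \<in> S \<and> i < j \<and> fl (p i) (p j)}"
  define E where "E = {{u,v} | u v. u \<in> S \<and> v \<in> S \<and> u \<noteq> v \<and> fl u v}"
  define W where "W = {w \<in> S. a < w \<and> w < b}"
  have finA: "finite A" unfolding A_def
    by (rule finite_subset[of _ "S \<times> S"]) (use S in auto)
  have finB: "finite B" unfolding B_def
    by (rule finite_subset[of _ "S \<times> S"]) (use S in auto)
  have cA: "card A = card (A - B) + card (A \<inter> B)"
  proof -
    have "A = (A - B) \<union> (A \<inter> B)" by blast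
    then show ?thesis using finA by (metis card_Un_disjoint Diff_disjoint Int_Diff_disjoint finite_Diff finite_Int inf_commute)
  qed
  have cB: "card B = card (B - A) + card (A \<inter> B)"
  proof -
    have "B = (B - A) \<union> (A \<inter> B)" by blast
    then show ?thesis using finB by (metis card_Un_disjoint Diff_disjoint Int_Diff_disjoint finite_Diff finite_Int inf_commute)
  qed
  have FAB: "F = (A - B) \<union> (B - A)"
unfolding F_def A_def B_def fl_def by auto
  have cF: "card F = card (A - B) + card (B - A)"
    unfolding FAB using finA finB by (intro card_Un_disjoint) auto
  have injp: "inj p" using p permutes_inj by blast
  have pS: "\<And>x. (p x \<in> S) = (x \<in> S)" by (rule permutes_in_image[OF p])
  have flsym: "fl u v = fl v u" if "u \<noteq> v" for u v
  proof -
    have "?t u \<noteq> ?t v" using that by (metis transpose_eq_imp_eq)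
then show ?thesis using that unfolding fl_def by linarith
  qed
  have cFE: "card F = card E"
  proof -
    have inj: "inj_on (\<lambda>(i,j). {p i, p j}) F"
    proof (rule inj_onI, clarify)
      fix i j i' j'
      assume "(i,j) \<in> F" "(i',j') \<in> F" "{p i, p j} = {p i', p j'}"
      then have "i < j" "i' < j'" "{i,j} = {i',j'}" unfolding F_def
        using injp by (auto simp: doubleton_eq_iff inj_eq)
      then show "i = i' \<and> j = j'" by (auto simp: doubleton_eq_iff)
    qed
    have img: "(\<lambda>(i,j). {p i, p j}) ` F = E"
    proof
      show "(\<lambda>(i,j). {p i, p j}) ` F \<subseteq> E"
unfolding F_def E_def using injp pS by (fastforce simp: inj_eq)
    next
      show "E \<subseteq> (\<lambda>(i,j). {p i, p j}) ` F"
      proof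
        fix x assume "x \<in> E"
        then obtain u v where x: "x = {u,v}" "u \<in> S" "v \<in> S" "u \<noteq> v" "fl u v"
          unfolding E_def by blast
        define i where "i = inv p u"
        define j where "j = inv p v"
        have pi: "p i = u" "p j = v" unfolding i_def j_def
          using p permutes_inverses(1) by fastforce+
        have ij: "i \<in> S" "j \<in> S" using pi pS x by auto
        have "i \<noteq> j" using pi x by auto
        then consider "i < j" | "j < i" by linarith
        then show "x \<in> (\<lambda>(i,j). {p i, p j}) ` F"
        proof cases
          case 1
          then have "(i,j) \<in> F" unfolding F_def using ij pi x by auto
then show ?thesis using pi x by force
        next
          case 2
          then have "(j,i) \<in> F" unfolding F_def using ij pi x flsym by auto
then show ?thesis using pi x by force
        qed
      qed
    qed
    show ?thesis using inj img card_image by fastforce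
  qed
  have EW: "E = insert {a,b} ((\<lambda>w. {a,w}) ` W \<union> (\<lambda>w. {b,w}) ` W)"
  proof
    show "E \<subseteq> insert {a,b} ((\<lambda>w. {a,w}) ` W \<union> (\<lambda>w. {b,w}) ` W)"
    proof
      fix x assume "x \<in> E"
      then obtain u v where x: "x = {u,v}" "u \<in> S" "v \<in> S" "u \<noteq> v" "fl u v"
        unfolding E_def by blast
      have key: "a < w \<and> w < b" if "fl z w" "z \<in> {a,b}" "w \<notin> {a,b}" for z w
        using that ab unfolding fl_def by auto
      have "u = a \<or> u = b \<or> v = a \<or> v = b"
      proof (rule ccontr)
        assume "\<not> ?thesis"
        then have "?t u = u" "?t v = v" by auto
        then show False using x(5) unfolding fl_def by simp
      qed
      moreover have fvu: "fl v u" using flsym x by blast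
      ultimately consider "{u,v} = {a,b}" | "u \<in> {a,b}" "v \<notin> {a,b}" | "v \<in> {a,b}" "u \<notin> {a,b}"
        using x(4) ab by blast
      then show "x \<in> insert {a,b} ((\<lambda>w. {a,w}) ` W \<union> (\<lambda>w. {b,w}) ` W)"
      proof cases
        case 1 then show ?thesis using x by simp
      next
        case 2
        then have "v \<in> W" using key[OF x(5)] x unfolding W_def by blast
        then show ?thesis using 2 x by auto
      next
        case 3
        then have "u \<in> W" using key[OF fvu] x unfolding W_def by blast
        then show ?thesis using 3 x by (auto simp: insert_commute)
      qed
    qed
  next
    show "insert {a,b} ((\<lambda>w. {a,w}) ` W \<union> (\<lambda>w. {b,w}) ` W) \<subseteq> E"
    proof -
      have "{a,b} \<in> E" unfolding E_def fl_def using ab by (intro CollectI exI[of _ a] exI[of _ b]) auto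
      moreover have "{a,w} \<in> E" if "w \<in> W" for w
unfolding E_def fl_def using that ab unfolding W_def by (intro CollectI exI[of _ a] exI[of _ w]) auto
      moreover have "{b,w} \<in> E" if "w \<in> W" for w
unfolding E_def fl_def using that ab unfolding W_def by (intro CollectI exI[of _ b] exI[of _ w]) auto
      ultimately show ?thesis by blast
    qed
  qed
  have finW: "finite W" unfolding W_def using S by auto
  have cE: "card E = Suc (card W + card W)"
  proof -
    have i1: "inj_on (\<lambda>w. {a,w}) W" by (rule inj_onI) (auto simp: W_def doubleton_eq_iff)
    have i2: "inj_on (\<lambda>w. {b,w}) W" by (rule inj_onI) (auto simp: W_def doubleton_eq_iff)
    have d: "(\<lambda>w. {a,w}) ` W \<inter> (\<lambda>w. {b,w}) ` W = {}" using ab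
      by (auto simp: W_def doubleton_eq_iff)
    have n: "{a,b} \<notin> (\<lambda>w. {a,w}) ` W \<union> (\<lambda>w. {b,w}) ` W" using ab
      by (auto simp: W_def doubleton_eq_iff)
    show ?thesis unfolding EW using finW n d
      by (simp add: card_Un_disjoint card_image i1 i2)
  qed
  have "INV (?t \<circ> p) S + INV p S = card A + card B"
    unfolding INV_def A_def B_def by simp
  also have "\<dots> = card F + 2 * card (A \<inter> B)" using cA cB cF by simp
  finally show ?thesis using cFE cE by simp
qed

lemma odd_neg: "odd (x + y) \<Longrightarrow> ((-1::int)^x) = - ((-1)^y)"
  by (cases "even y") auto

lemma sign_INV:
  fixes p :: "nat \<Rightarrow> nat"
  assumes "p permutes S" "finite S"
  shows "sign p = (-1) ^ INV p S"
  using assms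
proof (induction p rule: permutes_induct)
  case id
  have "INV (\<lambda>a. a) S = 0" unfolding INV_def by (auto simp: card_eq_0_iff)
  then show ?case by simp
next
  case (swap a b p)
  have sg: "sign (Transposition.transpose a b \<circ> p) = - sign p"
    using swap assms(2)
    by (simp add: sign_compose permutation_swap_id permutes_imp_permutation[OF assms(2)] sign_swap_id)
  have "odd (INV (Transposition.transpose a b \<circ> p) S + INV p S)"
  proof (cases "a < b")
    case True then show ?thesis using flip_odd[OF assms(2) \<open>p permutes S\<close>] swap by blast
  next
    case False
    then have "b < a" using swap by linarith
    then show ?thesis using flip_odd[OF assms(2) \<open>p permutes S\<close> swap(2) swap(1)] by (simp add: transpose_commute)
  qed
  then show ?case using sg swap odd_neg by metis
qed




definition aval :: "nat \<Rightarrow> 'k::ring_1 utm" where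
  "aval j = ((if j = 1 then gone else 0), (if j = 2 then gone else 0), gmono {j} 1)"

definition gsel :: "nat \<Rightarrow> nat \<Rightarrow> 'k ncpoly" where
  "gsel n i = (if i = n+1 then PMul (PVar 1) (PVar 1) else if i = n+2 then PMul (PVar 1) (PVar 2) else PVar i)"

definition yv :: "nat \<Rightarrow> nat \<Rightarrow> 'k::ring_1 utm" where
  "yv n i = peval aval (gsel n i)"

lemma acomm_fst: "fst (acomm X Y) = gmul (fst X) (fst Y) - gmul (fst Y) (fst X)"
  by (cases X; cases Y) (simp add: acomm_def)
lemma acomm_tr: "fst (snd (acomm X Y)) = (gmul (fst X) (fst (snd Y)) + gmul (fst (snd X)) (snd (snd Y)))
   - (gmul (fst Y) (fst (snd X)) + gmul (fst (snd Y)) (snd (snd X)))"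
  by (cases X; cases Y) (simp add: acomm_def)
lemma acomm_br: "snd (snd (acomm X Y)) = gmul (snd (snd X)) (snd (snd Y)) - gmul (snd (snd Y)) (snd (snd X))"
  by (cases X; cases Y) (simp add: acomm_def)

lemma aval1: "aval 1 = (gone, 0, gmono {1} 1)" by (simp add: aval_def)

lemma gmul_comm_cases: "(x = 0 \<or> x = gone) \<Longrightarrow> (y = 0 \<or> y = gone) \<Longrightarrow> gmul x y - gmul y x = (0::'k::ring_1 grass)"
  by auto

context
  fixes n :: nat
  assumes n2: "2 \<le> n"
begin

lemma yv_low: "1 \<le> i \<Longrightarrow> i \<le> n \<Longrightarrow> yv n i = aval i"
  by (simp add: yv_def gsel_def)

lemma yv_n1: "yv n (Suc n) = ((gone::'k::ring_1 grass), 0, 0)"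
  using n2 by (simp add: yv_def gsel_def aval_def gone_gone gmul_mono_mono)

lemma yv_n2: "yv n (Suc (Suc n)) = (0, (gone::'k::ring_1 grass), gmono {1,2} 1)"
  using n2 by (simp add: yv_def gsel_def aval_def gone_gone gmul_mono_mono grass_sgn_single insert_commute)

lemma yv_1: "yv n 1 = aval 1" using n2 by (simp add: yv_low)

lemma yv_tl: "j \<in> {1..n+2} \<Longrightarrow> fst (yv n j) = (0::'k::ring_1 grass) \<or> fst (yv n j) = gone"
proof -
  assume "j \<in> {1..n+2}"
  then consider "j \<le> n" "1 \<le> j" | "j = n+1" | "j = n+2" by fastforce
  then show ?thesis
    by cases (auto simp: yv_low yv_n1 yv_n2 aval_def)
qed

lemma yv_br: "j \<in> {1..n+2} \<Longrightarrow> snd (snd (yv n j)) =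
   (if j \<le> n then gmono {j} 1 else if j = n+1 then 0 else (gmono {1,2} 1 :: 'k::ring_1 grass))"
proof -
  assume "j \<in> {1..n+2}"
  then consider "j \<le> n" "1 \<le> j" | "j = n+1" | "j = n+2" by fastforce
  then show ?thesis
    by cases (auto simp: yv_low yv_n1 yv_n2 aval_def)
qed

lemma comm_tl: "j1 \<in> {1..n+2} \<Longrightarrow> j2 \<in> {1..n+2} \<Longrightarrow> fst (acomm (yv n j1) (yv n j2)) = (0::'k::ring_1 grass)"
  unfolding acomm_fst by (rule gmul_comm_cases[OF yv_tl yv_tl])

end




lemma gmul_0_left'[simp]: "gmul (\<lambda>a. 0) x = (\<lambda>a. 0)"
  using gmul_0_left by (simp add: zero_fun_def)
lemma gmul_0_right'[simp]: "gmul x (\<lambda>a. 0) = (\<lambda>a. 0)"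
  using gmul_0_right by (simp add: zero_fun_def)
lemma aval1': "aval (Suc 0) = (gone, 0, gmono {1} 1)" by (simp add: aval_def)

lemma foldl_amul_TR:
  "fst L = 0 \<Longrightarrow> \<forall>C\<in>set Cs. fst C = 0 \<Longrightarrow>
   fst (foldl amul L Cs) = (0::'k::ring_1 grass) \<and>
   fst (snd (foldl amul L Cs)) = foldl gmul (fst (snd L)) (map (\<lambda>C. snd (snd C)) Cs)"
proof (induction Cs arbitrary: L)
  case Nil then show ?case by simp
next
  case (Cons C Cs)
  obtain a b c where L: "L = (a,b,c)" by (cases L)
  obtain a' b' c' where C: "C = (a',b',c')" by (cases C)
  have "fst (amul L C) = 0" "fst (snd (amul L C)) = gmul (fst (snd L)) (snd (snd C))"
    using Cons.prems by (simp_all add: L C zero_fun_def)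
  then show ?case using Cons.IH[of "amul L C"] Cons.prems by simp
qed

lemma foldl_gmul_0: "foldl gmul 0 ms = (0::'k::ring_1 grass)"
  by (induction ms) simp_all

lemma foldl_gmul_zero_in: "0 \<in> set ms \<Longrightarrow> foldl gmul x ms = (0::'k::ring_1 grass)"
proof -
  assume "0 \<in> set ms"
  then obtain xs ys where "ms = xs @ 0 # ys" by (meson split_list)
  then show ?thesis by (simp add: foldl_gmul_0)
qed

lemma long_comm:
  "fst L = (0::'k::ring_1 grass) \<Longrightarrow>
   fst (foldl acomm L (replicate k (aval 1))) = 0 \<and>
   fst (snd (foldl acomm L (replicate k (aval 1)))) {} = (-1)^k * fst (snd L) {}"
proof (induction k arbitrary: L)
  case 0 then show ?case by simp
next
  case (Suc k)
  have f: "fst (acomm L (aval 1)) = 0" using Suc.prems by (simp add: acomm_fst aval1 aval1')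
  have t0: "fst (snd (acomm L (aval 1))) = (gmul (fst L) 0 + gmul (fst (snd L)) (gmono {1} 1))
      - (gmul gone (fst (snd L)) + gmul 0 (snd (snd L)))"
    unfolding acomm_tr aval1 by simp
  have t: "fst (snd (acomm L (aval 1))) {} = - fst (snd L) {}"
    unfolding t0 by (simp only: gmul_0_right gmul_0_left add_0 add_0_right minus_apply plus_fun_apply
       gmul_mono_right gmul_gone_left_empty zero_fun_apply) simp
  have e: "foldl acomm L (replicate (Suc k) (aval 1)) = foldl acomm (acomm L (aval 1)) (replicate k (aval 1))"
    by simp
  have IH: "fst (foldl acomm (acomm L (aval 1)) (replicate k (aval 1))) = 0 \<and>
     fst (snd (foldl acomm (acomm L (aval 1)) (replicate k (aval 1)))) {} = (-1)^k * fst (snd (acomm L (aval 1))) {}"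
    by (rule Suc.IH[OF f])
  show ?case unfolding e
  proof
    show "fst (foldl acomm (acomm L (aval 1)) (replicate k (aval 1))) = 0" using IH by (rule conjunct1)
    have "fst (snd (foldl acomm (acomm L (aval 1)) (replicate k (aval 1)))) {} = (-1)^k * fst (snd (acomm L (aval 1))) {}"
      using IH by (rule conjunct2)
    also have "\<dots> = (-1)^k * (- fst (snd L) {})" by (simp only: t)
    also have "\<dots> = (-1)^Suc k * fst (snd L) {}" by simp
    finally show "fst (snd (foldl acomm (acomm L (aval 1)) (replicate k (aval 1)))) {} = (-1)^Suc k * fst (snd L) {}" .
  qed
qed




lemma gmono_diff: "gmono S c - gmono S d = gmono S (c - d)"
  by (auto simp: gmono_def fun_eq_iff)

lemma gmono_zero: "gmono S 0 = 0"
  by (auto simp: gmono_def fun_eq_iff)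

lemma e12_comm:
  assumes "1 \<le> k"
  shows "gmul (gmono {1,2} 1) (gmono {k} 1) = gmul (gmono {k} 1) (gmono {1,2} (1::'k::ring_1))"
proof (cases "k \<in> {1,2}")
  case True
  then show ?thesis by (auto simp: gmul_mono_mono)
next
  case False
  then have k3: "3 \<le> k" using assms by auto
  have s1: "{(s,t). s \<in> {1,2::nat} \<and> t \<in> {k} \<and> t < s} = {}" using k3 by auto
  have s2: "{(s,t). s \<in> {k} \<and> t \<in> {1,2::nat} \<and> t < s} = {(k,1),(k,2)}" using k3 by auto
  have g1: "grass_sgn {1,2} {k} = (1::'k)" unfolding grass_sgn_def s1 by simp
  have g2: "grass_sgn {k} {1,2} = (1::'k)" unfolding grass_sgn_def s2 using k3 by simp
  show ?thesis using False by (simp add: gmul_mono_mono g1[simplified] g2[simplified] insert_commute)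
qed

context
  fixes n :: nat
  assumes n2: "2 \<le> n"
begin

lemma br_pair:
  assumes "1 \<le> a" "a \<le> n" "1 \<le> b" "b \<le> n" "a \<noteq> b"
  shows "snd (snd (acomm (yv n a) (yv n b))) = (gmono {a,b} (2 * (if b < a then -1 else 1)) :: 'k::ring_1 grass)"
proof -
  have ya: "snd (snd (yv n a)) = (gmono {a} 1 :: 'k grass)" using yv_br[OF n2, of a] assms by simp
  have yb: "snd (snd (yv n b)) = (gmono {b} 1 :: 'k grass)" using yv_br[OF n2, of b] assms by simp
  have "snd (snd (acomm (yv n a) (yv n b))) = gmono {a,b} (grass_sgn {a} {b}) - gmono {a,b} (grass_sgn {b} {a} :: 'k)"
    unfolding acomm_br ya yb using assms by (simp add: gmul_mono_mono insert_commute)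
  also have "\<dots> = gmono {a,b} (2 * (if b < a then -1 else 1))"
    unfolding gmono_diff grass_sgn_single using assms by auto
  finally show ?thesis .
qed

lemma br_zero:
  assumes "j1 \<in> {1..n+2}" "j2 \<in> {1..n+2}" "j1 \<in> {n+1,n+2} \<or> j2 \<in> {n+1,n+2}"
  shows "snd (snd (acomm (yv n j1) (yv n j2))) = (0 :: 'k::ring_1 grass)"
proof -
  define B where "B j = (if j \<le> n then gmono {j} 1 else if j = n+1 then 0 else (gmono {1,2} 1 :: 'k grass))" for j
  have y1: "snd (snd (yv n j1)) = B j1" using yv_br[OF n2 assms(1)] unfolding B_def by simp
  have y2: "snd (snd (yv n j2)) = B j2" using yv_br[OF n2 assms(2)] unfolding B_def by simp
  have c: "gmul (B j) (B j') = gmul (B j') (B j)" if "j \<in> {1..n+2}" "j' \<in> {1..n+2}" "j \<in> {n+1,n+2}" for j j'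
  proof (cases "j = n+1")
    case True then show ?thesis unfolding B_def using n2 by simp
  next
    case False
    then have j: "j = n+2" using that by auto
    have Bj: "B j = gmono {1,2} 1" unfolding B_def j by simp
    have "j' \<le> n \<or> j' = n+1 \<or> j' = n+2" using that(2) by auto
    then consider "j' \<le> n" | "j' = n+1" | "j' = n+2" by blast
    then show ?thesis
    proof cases
      case 1 then show ?thesis unfolding Bj unfolding B_def using that e12_comm[of j'] by simp
    next
      case 2 then show ?thesis unfolding Bj unfolding B_def by simp
    next
      case 3 then show ?thesis unfolding Bj unfolding B_def by simp
    qed
  qed
  show ?thesis unfolding acomm_br y1 y2 using c assms by auto
qed

end

lemma INV_split:
  fixes \<sigma> :: "nat \<Rightarrow> nat"
  assumes fin: "finite I0" and lt: "\<forall>i\<in>I0. i < p" and pq: "p < q"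
  shows "INV \<sigma> (I0 \<union> {p,q}) = INV \<sigma> I0 + card {(i,j). i \<in> I0 \<and> j \<in> {p,q} \<and> \<sigma> j < \<sigma> i}
     + (if \<sigma> q < \<sigma> p then 1 else 0)"
proof -
  define O1 where "O1 = {(i,j). i \<in> I0 \<and> j \<in> I0 \<and> i < j \<and> \<sigma> j < \<sigma> i}"
  define X where "X = {(i,j). i \<in> I0 \<and> j \<in> {p,q} \<and> \<sigma> j < \<sigma> i}"
  define Z where "Z = (if \<sigma> q < \<sigma> p then {(p,q)} else {})"
  have eq: "{(i,j). i \<in> I0 \<union> {p,q} \<and> j \<in> I0 \<union> {p,q} \<and> i < j \<and> \<sigma> j < \<sigma> i} = O1 \<union> X \<union> Z"
    unfolding O1_def X_def Z_def using lt pq by auto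
  have fO: "finite O1" unfolding O1_def by (rule finite_subset[of _ "I0 \<times> I0"]) (use fin in auto)
  have fX: "finite X" unfolding X_def by (rule finite_subset[of _ "I0 \<times> {p,q}"]) (use fin in auto)
  have fZ: "finite Z" unfolding Z_def by auto
  have d1: "O1 \<inter> X = {}" unfolding O1_def X_def using lt pq by auto
  have d2: "(O1 \<union> X) \<inter> Z = {}" unfolding O1_def X_def Z_def using lt pq by auto
  have "card (O1 \<union> X \<union> Z) = card O1 + card X + card Z"
    using fO fX fZ d1 d2 by (simp add: card_Un_disjoint)
  moreover have "card Z = (if \<sigma> q < \<sigma> p then 1 else 0)" unfolding Z_def by simp
  ultimately show ?thesis unfolding INV_def eq[unfolded INV_def] O1_def[symmetric] X_def[symmetric]
    by (simp add: O1_def X_def)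
qed

lemma cross_card:
  fixes \<sigma> :: "nat \<Rightarrow> nat"
  assumes fin: "finite I0" and inj: "inj_on \<sigma> (I0 \<union> {p,q})" and pq: "p \<noteq> q"
  shows "card {(s,t). s \<in> \<sigma> ` I0 \<and> t \<in> {\<sigma> p, \<sigma> q} \<and> t < s} = card {(i,j). i \<in> I0 \<and> j \<in> {p,q} \<and> \<sigma> j < \<sigma> i}"
proof -
  let ?X = "{(i,j). i \<in> I0 \<and> j \<in> {p,q} \<and> \<sigma> j < \<sigma> i}"
  have spq: "\<sigma> p \<noteq> \<sigma> q" using inj pq by (auto dest: inj_onD)
  have img: "{(s,t). s \<in> \<sigma> ` I0 \<and> t \<in> {\<sigma> p, \<sigma> q} \<and> t < s} = map_prod \<sigma> \<sigma> ` ?X"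
    by auto
  have "inj_on (map_prod \<sigma> \<sigma>) ?X"
  proof (rule inj_onI)
    fix x y
    assume "x \<in> ?X" "y \<in> ?X" "map_prod \<sigma> \<sigma> x = map_prod \<sigma> \<sigma> y"
    then show "x = y" using inj pq spq by (cases x; cases y) (auto dest: inj_onD)
  qed
  then show ?thesis unfolding img by (rule card_image)
qed




definition PM :: "(nat \<Rightarrow> nat) \<Rightarrow> nat \<Rightarrow> 'k::ring_1 grass" where
  "PM \<sigma> i = gmono {\<sigma>(2*i+1), \<sigma>(2*i+2)} (2 * (if \<sigma>(2*i+2) < \<sigma>(2*i+1) then -1 else 1))"

lemma prod_pairs:
  fixes \<sigma> :: "nat \<Rightarrow> nat" and x :: "'k::comm_ring_1 grass"
  assumes "inj_on \<sigma> {3..<2*r+3}"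
  shows "foldl gmul x (map (PM \<sigma>) [1..<r+1]) (\<sigma> ` {3..<2*r+3}) = x {} * 2^r * (-1)^(INV \<sigma> {3..<2*r+3})"
  using assms
proof (induction r)
  case 0
  have "INV \<sigma> {} = 0" by (simp add: INV_def)
  then show ?case by simp
next
  case (Suc r)
  define I0 where "I0 = {3..<2*r+3}"
  define p where "p = 2*r+3"
  define q where "q = 2*r+4"
  have I': "{3..<2*Suc r+3} = I0 \<union> {p,q}" unfolding I0_def p_def q_def by auto
  have inj': "inj_on \<sigma> (I0 \<union> {p,q})" using Suc.prems I' by simp
  have inj0: "inj_on \<sigma> I0" using inj' by (rule inj_on_subset) auto
  have fin0: "finite I0" unfolding I0_def by simp
  have lt: "\<forall>i\<in>I0. i < p" unfolding I0_def p_def by auto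
  have pq: "p < q" unfolding p_def q_def by simp
  define a where "a = \<sigma> p"
  define b where "b = \<sigma> q"
  have ab: "a \<noteq> b" unfolding a_def b_def using inj' pq by (auto dest: inj_onD)
  have ni: "a \<notin> \<sigma> ` I0" "b \<notin> \<sigma> ` I0" unfolding a_def b_def using inj' lt pq
    by (auto dest: inj_onD)
  have PMs: "PM \<sigma> (Suc r) = gmono {a,b} (2 * (if b < a then -1 else 1))"
  proof -
    have e1: "2 * Suc r + 1 = p" "2 * Suc r + 2 = q" unfolding p_def q_def by simp_all
    show ?thesis unfolding PM_def e1 a_def b_def ..
  qed
  have W: "\<sigma> ` {3..<2*Suc r+3} = \<sigma> ` I0 \<union> {a,b}" unfolding I' a_def b_def by auto
  have WD: "(\<sigma> ` I0 \<union> {a,b}) - {a,b} = \<sigma> ` I0" using ni by auto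
  have upt: "[1..<Suc r+1] = [1..<r+1] @ [Suc r]" by simp
  define Q where "Q = foldl gmul x (map (PM \<sigma>) [1..<r+1])"
  have IH: "Q (\<sigma> ` I0) = x {} * 2^r * (-1)^(INV \<sigma> I0)"
    unfolding Q_def I0_def by (rule Suc.IH) (use inj0 in \<open>simp add: I0_def\<close>)
  define Xc where "Xc = card {(i,j). i \<in> I0 \<and> j \<in> {p,q} \<and> \<sigma> j < \<sigma> i}"
  have gs: "grass_sgn (\<sigma> ` I0) {a,b} = ((-1)^Xc :: 'k)"
    unfolding grass_sgn_def Xc_def a_def b_def
    using cross_card[OF fin0 inj'] pq by simp
  have INVs: "INV \<sigma> (I0 \<union> {p,q}) = INV \<sigma> I0 + Xc + (if b < a then 1 else 0)"
    unfolding Xc_def a_def b_def by (rule INV_split[OF fin0 lt pq])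
  have "foldl gmul x (map (PM \<sigma>) [1..<Suc r+1]) (\<sigma> ` {3..<2*Suc r+3})
      = gmul Q (gmono {a,b} (2 * (if b < a then -1 else 1))) (\<sigma> ` I0 \<union> {a,b})"
  proof -
    have "foldl gmul x (map (PM \<sigma>) [1..<Suc r+1]) = gmul Q (PM \<sigma> (Suc r))"
      unfolding upt Q_def by simp
    then show ?thesis by (simp only: PMs W)
  qed
  also have "\<dots> = grass_sgn (\<sigma> ` I0) {a,b} * Q (\<sigma> ` I0) * (2 * (if b < a then -1 else 1))"
    unfolding gmul_mono_right using fin0 WD by simp
  also have "\<dots> = x {} * 2^Suc r * (-1)^(INV \<sigma> I0 + Xc + (if b < a then 1 else 0))"
    unfolding gs IH by (cases "b < a") (simp_all add: power_add algebra_simps)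
  finally show ?case unfolding I' INVs .
qed




lemma INV_front:
  fixes \<sigma> :: "nat \<Rightarrow> nat"
  assumes fin: "finite T" and gt: "\<forall>j\<in>T. 2 < j" and sm: "\<forall>j\<in>T. \<sigma> j < \<sigma> 1 \<and> \<sigma> j < \<sigma> 2"
  shows "INV \<sigma> ({1,2} \<union> T) = (if \<sigma> 2 < \<sigma> 1 then 1 else 0) + 2 * card T + INV \<sigma> T"
proof -
  define Z where "Z = (if \<sigma> 2 < \<sigma> 1 then {(1::nat,2::nat)} else {})"
  define O1 where "O1 = {(i,j). i \<in> T \<and> j \<in> T \<and> i < j \<and> \<sigma> j < \<sigma> i}"
  have eq: "{(i,j). i \<in> {1,2} \<union> T \<and> j \<in> {1,2} \<union> T \<and> i < j \<and> \<sigma> j < \<sigma> i}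
     = Z \<union> ({1} \<times> T) \<union> ({2} \<times> T) \<union> O1"
    unfolding Z_def O1_def using gt sm by auto
  have fO: "finite O1" unfolding O1_def by (rule finite_subset[of _ "T \<times> T"]) (use fin in auto)
  have d1: "Z \<inter> ({1} \<times> T) = {}" unfolding Z_def using gt by auto
  have d2: "(Z \<union> ({1} \<times> T)) \<inter> ({2} \<times> T) = {}" unfolding Z_def using gt by auto
  have d3: "(Z \<union> ({1} \<times> T) \<union> ({2} \<times> T)) \<inter> O1 = {}" unfolding Z_def O1_def using gt by auto
  have "card (Z \<union> ({1} \<times> T) \<union> ({2} \<times> T) \<union> O1) = card Z + card ({1::nat} \<times> T) + card ({2::nat} \<times> T) + card O1"
    using fin fO d1 d2 d3 by (simp add: card_Un_disjoint Z_def)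
  also have "\<dots> = (if \<sigma> 2 < \<sigma> 1 then 1 else 0) + 2 * card T + card O1"
    by (simp add: Z_def card_cartesian_product)
  finally show ?thesis unfolding INV_def eq O1_def by simp
qed

lemma pow_cancel: "(-1::'a::comm_ring_1)^(z + 2*n + I) * (-1)^z * (-1)^I = 1"
proof -
  have e: "z + 2*n + I + z + I = 2*(z+n+I)" by simp
  have "(-1::'a)^(z + 2*n + I) * (-1)^z * (-1)^I = (-1)^(z + 2*n + I + z + I)"
    by (simp only: power_add)
  also have "\<dots> = ((-1)^2)^(z+n+I)" by (simp only: e power_mult)
  finally show ?thesis by simp
qed

context
  fixes n :: nat
  assumes n2: "2 \<le> n" and ev: "even n"
begin

definition surv :: "(nat \<Rightarrow> nat) \<Rightarrow> bool" where
  "surv \<sigma> \<longleftrightarrow> \<sigma> 1 \<in> {n+1,n+2} \<and> \<sigma> 2 \<in> {n+1,n+2}"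

lemma nonsurv_idx:
  assumes sp: "\<sigma> permutes {1..n+2}" and ns: "\<not> surv \<sigma>"
  shows "\<exists>i\<in>{1..<n div 2 + 1}. \<sigma> (2*i+1) \<in> {n+1,n+2} \<or> \<sigma> (2*i+2) \<in> {n+1,n+2}"
proof -
  obtain v where v: "v \<in> {n+1,n+2}" "v \<noteq> \<sigma> 1" "v \<noteq> \<sigma> 2"
  proof (cases "\<sigma> 1 \<in> {n+1,n+2}")
    case True
    then have "\<sigma> 2 \<notin> {n+1,n+2}" using ns unfolding surv_def by blast
    then show ?thesis using that[of "if \<sigma> 1 = n+1 then n+2 else n+1"] True by auto
  next
    case False
    then show ?thesis using that[of "if \<sigma> 2 = n+1 then n+2 else n+1"] by auto
  qed
  define p where "p = inv \<sigma> v"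
  have pv: "\<sigma> p = v" unfolding p_def using sp permutes_inverses(1) by fastforce
  have vS: "v \<in> {1..n+2}" using v n2 by auto
  have pS: "p \<in> {1..n+2}" using pv vS permutes_in_image[OF sp, of p] by simp
  have p12: "p \<noteq> 1" "p \<noteq> 2" using pv v by auto
  define i where "i = (p - 1) div 2"
  have "1 \<le> i" "i < n div 2 + 1" "p = 2*i+1 \<or> p = 2*i+2"
    using pS p12 ev unfolding i_def by (auto elim!: evenE)
  then show ?thesis using pv v by auto
qed

lemma term_val:
  fixes \<sigma> :: "nat \<Rightarrow> nat"
  assumes sp: "\<sigma> permutes {1..n+2}"
  shows "of_int (sign \<sigma>) * fst (snd (foldl amul (foldl acomm (acomm (yv n (\<sigma> 1)) (yv n (\<sigma> 2))) (replicate k (yv n 1)))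
      (map (\<lambda>i. acomm (yv n (\<sigma> (2*i+1))) (yv n (\<sigma> (2*i+2)))) [1..<n div 2 + 1]))) {1..n}
    = (if surv \<sigma> then (-1)^k * 2^(n div 2) else (0::'k::field_char_0))"
proof -
  define L0 :: "'k utm" where "L0 = acomm (yv n (\<sigma> 1)) (yv n (\<sigma> 2))"
  define L :: "'k utm" where "L = foldl acomm L0 (replicate k (yv n 1))"
  define Cs :: "'k utm list" where "Cs = map (\<lambda>i. acomm (yv n (\<sigma> (2*i+1))) (yv n (\<sigma> (2*i+2)))) [1..<n div 2 + 1]"
  have S: "\<And>j. j \<in> {1..n+2} \<Longrightarrow> \<sigma> j \<in> {1..n+2}" using permutes_in_image[OF sp] by blast
  have inj: "inj \<sigma>" using sp permutes_inj by blast
  have h2: "2 * (n div 2) = n" using ev by simp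
  have fL0: "fst L0 = 0" unfolding L0_def by (rule comm_tl[OF n2]) (rule S, simp)+
  have LC: "fst L = 0 \<and> fst (snd L) {} = (-1)^k * fst (snd L0) {}"
    unfolding L_def yv_1[OF n2] by (rule long_comm[OF fL0])
  have idx: "2*i+1 \<in> {1..n+2}" "2*i+2 \<in> {1..n+2}" if "i \<in> {1..<n div 2 + 1}" for i
    using that h2 by auto
  have fC: "\<forall>C\<in>set Cs. fst C = 0"
  proof
    fix C assume "C \<in> set Cs"
    then obtain i where i: "i \<in> {1..<n div 2+1}" and C: "C = acomm (yv n (\<sigma> (2*i+1))) (yv n (\<sigma> (2*i+2)))"
      unfolding Cs_def set_map set_upt by blast
    show "fst C = 0" unfolding C by (rule comm_tl[OF n2]) (rule S, rule idx[OF i])+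
  qed
  have TRe: "fst (snd (foldl amul L Cs)) = foldl gmul (fst (snd L)) (map (\<lambda>C. snd (snd C)) Cs)"
    using foldl_amul_TR[OF conjunct1[OF LC] fC] by blast
  have goal_eq: "fst (snd (foldl amul (foldl acomm (acomm (yv n (\<sigma> 1)) (yv n (\<sigma> 2))) (replicate k (yv n 1)))
      (map (\<lambda>i. acomm (yv n (\<sigma> (2*i+1))) (yv n (\<sigma> (2*i+2)))) [1..<n div 2 + 1]))) =
      foldl gmul (fst (snd L)) (map (\<lambda>C. snd (snd C)) Cs)"
    using TRe unfolding L_def L0_def Cs_def .
  show ?thesis
  proof (cases "surv \<sigma>")
    case False
    obtain i where i: "i \<in> {1..<n div 2 + 1}" "\<sigma> (2*i+1) \<in> {n+1,n+2} \<or> \<sigma> (2*i+2) \<in> {n+1,n+2}"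
      using nonsurv_idx[OF sp False] by blast
    have "snd (snd (acomm (yv n (\<sigma> (2*i+1))) (yv n (\<sigma> (2*i+2))))) = (0::'k grass)"
      by (rule br_zero[OF n2]) (use i idx S in auto)
    moreover have "acomm (yv n (\<sigma> (2*i+1))) (yv n (\<sigma> (2*i+2))) \<in> set Cs"
      unfolding Cs_def set_map set_upt using i(1) by blast
    ultimately have "0 \<in> set (map (\<lambda>C. snd (snd C)) Cs)" unfolding set_map by (metis image_eqI)
    then have "foldl gmul (fst (snd L)) (map (\<lambda>C. snd (snd C)) Cs) = 0"
      by (rule foldl_gmul_zero_in)
    then show ?thesis unfolding goal_eq using False by simp
  next
    case True
    have s12: "\<sigma> 1 \<noteq> \<sigma> 2" using injD[OF inj, of 1 2] by auto
    have low: "\<sigma> j \<in> {1..n}" if "j \<in> {3..n+2}" for j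
    proof -
      have "\<sigma> j \<noteq> \<sigma> 1" "\<sigma> j \<noteq> \<sigma> 2" using injD[OF inj, of j 1] injD[OF inj, of j 2] that by auto
      moreover have "\<sigma> j \<in> {1..n+2}" using S that by auto
      ultimately show ?thesis using True s12 unfolding surv_def by auto
    qed
    have mapeq: "map (\<lambda>C. snd (snd C)) Cs = map (PM \<sigma>) [1..<n div 2 + 1]"
      unfolding Cs_def map_map
    proof (rule map_cong[OF refl])
      fix i assume "i \<in> set [1..<n div 2 + 1]"
      then have i: "i \<in> {1..<n div 2 + 1}" by (simp only: set_upt)
      have a: "\<sigma> (2*i+1) \<in> {1..n}" "\<sigma> (2*i+2) \<in> {1..n}" using low idx[OF i] i by auto
      have ne: "\<sigma> (2*i+1) \<noteq> \<sigma> (2*i+2)" using injD[OF inj, of "2*i+1" "2*i+2"] by auto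
      show "((\<lambda>C. snd (snd C)) \<circ> (\<lambda>i. acomm (yv n (\<sigma> (2*i+1))) (yv n (\<sigma> (2*i+2))))) i = PM \<sigma> i"
        unfolding PM_def using br_pair[OF n2, of "\<sigma> (2*i+1)" "\<sigma> (2*i+2)"] a ne by simp
    qed
    have img: "\<sigma> ` {3..<2*(n div 2)+3} = {1..n}"
    proof
      show "\<sigma> ` {3..<2*(n div 2)+3} \<subseteq> {1..n}" using low h2 by auto
    next
      show "{1..n} \<subseteq> \<sigma> ` {3..<2*(n div 2)+3}"
      proof
        fix v assume v: "v \<in> {1..n}"
        define p where "p = inv \<sigma> v"
        have pv: "\<sigma> p = v" unfolding p_def using sp permutes_inverses(1) by fastforce
        have pS: "p \<in> {1..n+2}" using pv v permutes_in_image[OF sp, of p] by simp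
        have "p \<noteq> 1" "p \<noteq> 2" using pv v True unfolding surv_def by auto
        then have "p \<in> {3..<2*(n div 2)+3}" using pS h2 by auto
        then show "v \<in> \<sigma> ` {3..<2*(n div 2)+3}" using pv by blast
      qed
    qed
    have injT: "inj_on \<sigma> {3..<2*(n div 2)+3}" using inj by (auto intro: inj_on_subset)
    have PP: "foldl gmul (fst (snd L)) (map (PM \<sigma>) [1..<n div 2 + 1]) {1..n}
       = fst (snd L) {} * 2^(n div 2) * (-1)^(INV \<sigma> {3..<2*(n div 2)+3})"
      using prod_pairs[OF injT, of "fst (snd L)"] unfolding img .
    have L0v: "fst (snd L0) {} = (if \<sigma> 1 = n+1 then 1 else -1)"
    proof (cases "\<sigma> 1 = n+1")
      case True
      then have "\<sigma> 2 = n+2" using s12 \<open>surv \<sigma>\<close> unfolding surv_def by auto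
      then show ?thesis using True unfolding L0_def
        by (simp add: acomm_tr yv_n1[OF n2] yv_n2[OF n2] gone_gone) (simp add: gone_def)
    next
      case False
      then have "\<sigma> 1 = n+2" "\<sigma> 2 = n+1" using s12 \<open>surv \<sigma>\<close> unfolding surv_def by auto
      then show ?thesis using False unfolding L0_def
        by (simp add: acomm_tr yv_n1[OF n2] yv_n2[OF n2] gone_gone) (simp add: gone_def)
    qed
    define z where "z = (if \<sigma> 2 < \<sigma> 1 then 1 else 0::nat)"
    have zv: "(if \<sigma> 1 = n+1 then 1 else -1) = ((-1)^z :: 'k)"
      using True s12 unfolding z_def surv_def by auto
    define I where "I = INV \<sigma> {3..<2*(n div 2)+3}"
    have sg: "sign \<sigma> = (-1)^(z + 2*n + I)"
    proof -
      have fin: "finite {1..n+2}" by simp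
      have e: "{1..n+2} = {1,2} \<union> {3..<2*(n div 2)+3}" using h2 by auto
      have c: "card {3..<2*(n div 2)+3} = n" using h2 by simp
      have sm: "\<forall>j\<in>{3..<2*(n div 2)+3}. \<sigma> j < \<sigma> 1 \<and> \<sigma> j < \<sigma> 2"
        using low True h2 unfolding surv_def by fastforce
      have "INV \<sigma> {1..n+2} = z + 2*n + I"
        unfolding e I_def z_def using INV_front[OF _ _ sm] c by simp
      then show ?thesis using sign_INV[OF sp fin] by simp
    qed
    have "of_int (sign \<sigma>) * foldl gmul (fst (snd L)) (map (\<lambda>C. snd (snd C)) Cs) {1..n}
        = (-1)^(z + 2*n + I) * ((-1)^k * (-1)^z * 2^(n div 2) * (-1)^I)"
      unfolding mapeq PP conjunct2[OF LC] L0v zv sg I_def by simp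
    also have "\<dots> = (-1)^k * 2^(n div 2) * ((-1)^(z + 2*n + I) * (-1)^z * (-1)^I)"
      by (simp add: algebra_simps)
    also have "\<dots> = (-1)^k * 2^(n div 2)" by (simp only: pow_cancel mult_1_right)
    finally show ?thesis unfolding goal_eq using True by simp
  qed
qed

end




lemma asmul_tr: "fst (snd (asmul c X)) V = c * fst (snd X) V"
  by (cases X) simp

theorem lemma3p9:
  fixes n m :: nat
  assumes "n \<ge> 2" and "even n" and "m \<ge> n + 2"
  shows "\<exists>g :: nat \<Rightarrow> 'k::field_char_0 ncpoly.
           (\<forall>i \<in> {1..n+2}. pvars (g i) \<subseteq> {1..n}) \<and>
           (\<exists>a. (\<forall>j \<in> {1..n}. a j \<in> algA) \<and> f5 m n (\<lambda>i. peval a (g i)) \<noteq> 0)"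
proof -
  note n2 = assms(1) and ev = assms(2)
  have pv: "\<forall>i \<in> {1..n+2}. pvars (gsel n i :: 'k ncpoly) \<subseteq> {1..n}"
    using n2 by (auto simp: gsel_def)
  have fin1: "finite {T. gmono {j} (1::'k) T \<noteq> 0}" for j
    by (rule finite_subset[of _ "{{j}}"]) (auto simp: gmono_def)
  have gm: "gmono {j} (1::'k) \<in> grassmann" for j
    unfolding grassmann_def using fin1[of j] by (auto simp: gmono_def)
  have go: "(gone::'k grass) \<in> grassmann_even"
  proof -
    have "{T. (gone::'k grass) T \<noteq> 0} \<subseteq> {{}}" by (auto simp: gone_def)
    then have "finite {T. (gone::'k grass) T \<noteq> 0}" by (rule finite_subset) simp
    then show ?thesis unfolding grassmann_even_def grassmann_def by (auto simp: gone_def split: if_splits)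
  qed
  have z: "(0::'k grass) \<in> grassmann_even" unfolding grassmann_even_def grassmann_def by simp
  have ge: "grassmann_even \<subseteq> (grassmann :: 'k grass set)" unfolding grassmann_even_def by auto
  have av: "\<forall>j \<in> {1..n}. (aval j :: 'k utm) \<in> algA"
    unfolding algA_def aval_def using go z ge gm by auto
  have yeq: "(\<lambda>i. peval aval (gsel n i)) = (yv n :: nat \<Rightarrow> 'k utm)" by (rule ext) (simp add: yv_def)
  define k where "k = m - n - 2"
  define P where "P = {\<sigma>. \<sigma> permutes {1..n+2}}"
  define c :: 'k where "c = (-1)^k * 2^(n div 2)"
  have finP: "finite P" unfolding P_def by (rule finite_permutations) simp
  have "fst (snd (f5 m n (yv n :: nat \<Rightarrow> 'k utm))) {1..n}
     = (\<Sum>\<sigma>\<in>P. of_int (sign \<sigma>) * fst (snd (foldl amul (foldl acomm (acomm (yv n (\<sigma> 1)) (yv n (\<sigma> 2))) (replicate k (yv n 1)))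
      (map (\<lambda>i. acomm (yv n (\<sigma> (2*i+1))) (yv n (\<sigma> (2*i+2)))) [1..<n div 2 + 1]))) {1..n})"
    unfolding f5_def P_def k_def fst_sum snd_sum sum_fun_apply asmul_tr ..
  also have "\<dots> = (\<Sum>\<sigma>\<in>P. if surv n \<sigma> then c else 0)"
    unfolding c_def by (rule sum.cong[OF refl]) (rule term_val[OF n2 ev], simp add: P_def)
  also have "\<dots> = of_nat (card {\<sigma>\<in>P. surv n \<sigma>}) * c"
    using finP by (simp add: sum.inter_filter[symmetric])
  finally have eqv: "fst (snd (f5 m n (yv n :: nat \<Rightarrow> 'k utm))) {1..n} = of_nat (card {\<sigma>\<in>P. surv n \<sigma>}) * c" .
  define \<sigma>0 where "\<sigma>0 = Transposition.transpose 1 (n+1) \<circ> Transposition.transpose 2 (n+2)"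
  have s0: "\<sigma>0 \<in> {\<sigma>\<in>P. surv n \<sigma>}"
  proof -
    have "\<sigma>0 permutes {1..n+2}" unfolding \<sigma>0_def
      by (rule permutes_compose) (rule permutes_swap_id, use n2 in simp, simp)+
    moreover have "surv n \<sigma>0" unfolding \<sigma>0_def using n2 by (simp add: surv_def[OF n2 ev])
    ultimately show ?thesis unfolding P_def by simp
  qed
  have "card {\<sigma>\<in>P. surv n \<sigma>} \<noteq> 0" using s0 finP by auto
  moreover have "c \<noteq> 0" unfolding c_def by simp
  ultimately have "fst (snd (f5 m n (yv n :: nat \<Rightarrow> 'k utm))) {1..n} \<noteq> 0" unfolding eqv by simp
  then have "f5 m n (yv n :: nat \<Rightarrow> 'k utm) \<noteq> 0" by auto
  then show ?thesis using pv av unfolding yeq[symmetric] by blast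
qed


end
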